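(* Let $F:\mathbb{P}^2\to\mathbb{P}^5$ be the morphism $$(x;y;z)\mapsto\big(xyz;\ x(z^2-xy);\ x(xz-y^2);\ y(x^2-yz);\ y(xy-z^2);\ 3xyz-(x^3+y^3+z^3)\big).$$ Then $F$ is an immersion, i.e. its differential is injective on the tangent space at every point of $\mathbb{P}^2$. Moreover, $F$ is injective except that the three points $(1;0;0),(0;1;0),(0;0;1)$ are all mapped to $(0;0;0;0;0;1)$ and the three points $(1;1;1),(\omega;\omega^2;1),(\omega^2;\omega;1)$ are all mapped to $(1;0;0;0;0;0)$, where $\omega$ is a primitive cube root of unity.
   Context: Work over $\mathbb{C}$. This $F$ equals $p\circ\phi_S$, where $p$ is the Plücker embedding of $\mathrm{Gr}(2,\mathbb{C}^4)$ in $\mathbb{P}^5$ and $\phi_S$ is the morphism $\mathbb{P}^2\to\mathrm{Gr}(2,\mathbb{C}^4)$ given by the generating sections of $T_{\mathbb{P}^2}$ which are the images under the Euler surjection $\mathcal{O}(1)^3\to T_{\mathbb{P}^2}$ of $(X,0,0),(0,Y,0),(Y,Z,X),(Z,X,Y)$. *)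

theory Defs
  imports "HOL-Analysis.Analysis"
begin

text \<open>Homogeneous coordinates: a point of P^2 (resp. P^5) is represented by a nonzero
vector of complex^3 (resp. complex^6); two nonzero vectors represent the same point iff
they are proportional.\<close>

definition proj_eq :: "complex ^ 'n \<Rightarrow> complex ^ 'n \<Rightarrow> bool" where
  "proj_eq u v \<longleftrightarrow> (\<exists>c::complex. c \<noteq> 0 \<and> u = c *s v)"

definition Fmap :: "complex ^ 3 \<Rightarrow> complex ^ 6" where
  "Fmap v = (let x = v $ 1; y = v $ 2; z = v $ 3 in
     vector [x*y*z, x*(z^2 - x*y), x*(x*z - y^2), y*(x^2 - y*z), y*(x*y - z^2),
             3*x*y*z - (x^3 + y^3 + z^3)])"

end

theory Submission imports Defs begin

lemma exhaust_6:
  fixes x :: 6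
  shows "x = 1 \<or> x = 2 \<or> x = 3 \<or> x = 4 \<or> x = 5 \<or> x = 6"
proof (induct x)
  case (of_int z)
  then have "z = 0 \<or> z = 1 \<or> z = 2 \<or> z = 3 \<or> z = 4 \<or> z = 5" by fastforce
  then show ?case by auto
qed

lemma forall_6: "(\<forall>i::6. P i) \<longleftrightarrow> P 1 \<and> P 2 \<and> P 3 \<and> P 4 \<and> P 5 \<and> P 6"
  by (metis exhaust_6)

lemma vector_6 [simp]:
 "(vector [a,b,c,d,e,f] ::('a::zero)^6)$1 = a"
 "(vector [a,b,c,d,e,f] ::('a::zero)^6)$2 = b"
 "(vector [a,b,c,d,e,f] ::('a::zero)^6)$3 = c"
 "(vector [a,b,c,d,e,f] ::('a::zero)^6)$4 = d"
 "(vector [a,b,c,d,e,f] ::('a::zero)^6)$5 = e"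
 "(vector [a,b,c,d,e,f] ::('a::zero)^6)$6 = f"
  unfolding vector_def by simp_all

lemma Fmap_nth [simp]:
  "Fmap v $ 1 = v$1* v$2* v$3"
  "Fmap v $ 2 = v$1* ((v$3)^2 - v$1* v$2)"
  "Fmap v $ 3 = v$1* (v$1* v$3 - (v$2)^2)"
  "Fmap v $ 4 = v$2* ((v$1)^2 - v$2* v$3)"
  "Fmap v $ 5 = v$2* (v$1* v$2 - (v$3)^2)"
  "Fmap v $ 6 = 3* v$1* v$2* v$3 - ((v$1)^3 + (v$2)^3 + (v$3)^3)"
  unfolding Fmap_def Let_def by simp_all
lemma has_derivative_vecI:
  fixes f :: "'a::real_normed_vector \<Rightarrow> 'b::real_normed_vector ^ 'n"
  assumes d: "\<And>i. ((\<lambda>x. f x $ i) has_derivative (\<lambda>h. f' h $ i)) F"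
  shows "(f has_derivative f') F"
proof -
  have bl: "\<And>i. bounded_linear (\<lambda>h. f' h $ i)" using d has_derivative_bounded_linear by blast
  have lin: "linear f'"
  proof
    fix x y show "f' (x + y) = f' x + f' y"
      by (simp add: vec_eq_iff linear_add[OF bounded_linear.linear[OF bl]] linear_scale[OF bounded_linear.linear[OF bl]])
  next
    fix c::real and x show "f' (c *\<^sub>R x) = c *\<^sub>R f' x"
      by (simp add: vec_eq_iff linear_add[OF bounded_linear.linear[OF bl]] linear_scale[OF bounded_linear.linear[OF bl]])
  qed
  have "\<exists>K. \<forall>x. norm (f' x $ i) \<le> norm x * K" for i
    using bl[of i] bounded_linear.bounded by blast
  then obtain K where K: "\<And>i x. norm (f' x $ i) \<le> norm x * K i" by metis
  have blf: "bounded_linear f'"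
  proof (rule bounded_linear_intro[where K="sum K UNIV"])
    fix x y show "f' (x + y) = f' x + f' y" using lin by (simp add: linear_add)
  next
    fix r::real and x show "f' (r *\<^sub>R x) = r *\<^sub>R f' x" using lin by (simp add: linear_scale)
  next
    fix x
    have "norm (f' x) \<le> sum (\<lambda>i. norm (f' x $ i)) UNIV"
      unfolding norm_vec_def by (rule L2_set_le_sum) auto
    also have "\<dots> \<le> sum (\<lambda>i. norm x * K i) UNIV" by (rule sum_mono) (rule K)
    finally show "norm (f' x) \<le> norm x * sum K UNIV" by (simp add: sum_distrib_left)
  qed
  have t: "((\<lambda>y. ((f y $ i - f (Lim F (\<lambda>x. x)) $ i) - f' (y - Lim F (\<lambda>x. x)) $ i) /\<^sub>R norm (y - Lim F (\<lambda>x. x))) \<longlongrightarrow> 0) F" for i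
    using d[of i] unfolding has_derivative_def by blast
  have "((\<lambda>y. ((f y - f (Lim F (\<lambda>x. x))) - f' (y - Lim F (\<lambda>x. x))) /\<^sub>R norm (y - Lim F (\<lambda>x. x))) \<longlongrightarrow> 0) F"
  proof -
    have "((\<lambda>y. \<chi> i. ((f y $ i - f (Lim F (\<lambda>x. x)) $ i) - f' (y - Lim F (\<lambda>x. x)) $ i) /\<^sub>R norm (y - Lim F (\<lambda>x. x))) \<longlongrightarrow> (\<chi> i. 0)) F"
      by (rule tendsto_vec_lambda) (rule t)
    moreover have "(\<lambda>y. \<chi> i. ((f y $ i - f (Lim F (\<lambda>x. x)) $ i) - f' (y - Lim F (\<lambda>x. x)) $ i) /\<^sub>R norm (y - Lim F (\<lambda>x. x)))
       = (\<lambda>y. ((f y - f (Lim F (\<lambda>x. x))) - f' (y - Lim F (\<lambda>x. x))) /\<^sub>R norm (y - Lim F (\<lambda>x. x)))"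
      by (rule ext) (simp add: vec_eq_iff)
    moreover have "(\<chi> i. 0) = (0::'b^'n)" by (simp add: vec_eq_iff)
    ultimately show ?thesis by simp
  qed
  with blf show ?thesis unfolding has_derivative_def by blast
qed

lemma has_derivative_nth_id: "((\<lambda>w. w $ i) has_derivative (\<lambda>h. h $ i)) F"
  using bounded_linear.has_derivative[OF bounded_linear_vec_nth has_derivative_ident] .

definition Jm :: "complex^3 \<Rightarrow> complex^3 \<Rightarrow> complex^6" where
 "Jm v h = (let x = v$1; y = v$2; z = v$3; p = h$1; q = h$2; r = h$3 in
   vector [y*z*p + x*z*q + x*y*r,
           (z^2-2*x*y)*p - x^2*q + 2*x*z*r,
           (2*x*z-y^2)*p - 2*x*y*q + x^2*r,
           2*x*y*p + (x^2-2*y*z)*q - y^2*r,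
           y^2*p + (2*x*y-z^2)*q - 2*y*z*r,
           3*(y*z-x^2)*p + 3*(x*z-y^2)*q + 3*(x*y-z^2)*r])"

lemma Jm_nth [simp]:
  "Jm v h $ 1 = v$2* v$3* h$1 + v$1* v$3* h$2 + v$1* v$2* h$3"
  "Jm v h $ 2 = ((v$3)^2-2* v$1* v$2)* h$1 - (v$1)^2* h$2 + 2* v$1* v$3* h$3"
  "Jm v h $ 3 = (2* v$1* v$3-(v$2)^2)* h$1 - 2* v$1* v$2* h$2 + (v$1)^2* h$3"
  "Jm v h $ 4 = 2* v$1* v$2* h$1 + ((v$1)^2-2* v$2* v$3)* h$2 - (v$2)^2* h$3"
  "Jm v h $ 5 = (v$2)^2* h$1 + (2* v$1* v$2-(v$3)^2)* h$2 - 2* v$2* v$3* h$3"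
  "Jm v h $ 6 = 3*(v$2* v$3-(v$1)^2)* h$1 + 3*(v$1* v$3-(v$2)^2)* h$2 + 3*(v$1* v$2-(v$3)^2)* h$3"
  unfolding Jm_def Let_def by simp_all

lemma Fmap_deriv: "(Fmap has_derivative Jm v) (at v)"
proof (rule has_derivative_vecI)
  fix i :: 6
  from exhaust_6[of i] show "((\<lambda>x. Fmap x $ i) has_derivative (\<lambda>h. Jm v h $ i)) (at v)"
    by (elim disjE; simp only: Fmap_nth Jm_nth;
        auto intro!: derivative_eq_intros has_derivative_nth_id simp: algebra_simps power2_eq_square power3_eq_cube)
qed

lemma vec3_eq: "(u::'a^3) = w \<longleftrightarrow> u$1 = w$1 \<and> u$2 = w$2 \<and> u$3 = w$3"
  by (simp add: vec_eq_iff forall_3)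
lemma vec6_eq: "(u::'a^6) = w \<longleftrightarrow> u$1 = w$1 \<and> u$2 = w$2 \<and> u$3 = w$3 \<and> u$4 = w$4 \<and> u$5 = w$5 \<and> u$6 = w$6"
  by (simp add: vec_eq_iff forall_6)
lemma smult_nth [simp]: "(c *s u) $ i = c * u $ i"
  by (simp add: vector_scalar_mult_def)

lemma proj_eq_sym: "proj_eq u v \<Longrightarrow> proj_eq v (u::complex^'n)"
  unfolding proj_eq_def
  by (metis (no_types, lifting) left_inverse vector_smult_assoc vector_smult_lid inverse_eq_iff_eq inverse_zero)
lemma proj_eq_trans: "proj_eq u v \<Longrightarrow> proj_eq v w \<Longrightarrow> proj_eq u (w::complex^'n)"
  unfolding proj_eq_def by (metis mult_eq_0_iff vector_smult_assoc)
lemma proj_eqI: "c \<noteq> 0 \<Longrightarrow> u = c *s v \<Longrightarrow> proj_eq u v"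
  unfolding proj_eq_def by blast

lemma Fmap_scale: "Fmap (c *s v) = c^3 *s Fmap v"
  by (simp add: vec6_eq; intro conjI; algebra)

lemma proj_eq_Fmap: "proj_eq u v \<Longrightarrow> proj_eq (Fmap u) (Fmap v)"
  unfolding proj_eq_def by (metis Fmap_scale power_not_zero)

lemma nobase_alg:
  fixes x y z :: complex
  assumes "x*y*z = 0" "x*(z^2 - x*y) = 0" "x*(x*z - y^2) = 0" "y*(x^2 - y*z) = 0" "y*(x*y - z^2) = 0"
    "3*x*y*z - (x^3 + y^3 + z^3) = 0"
  shows "x = 0 \<and> y = 0 \<and> z = 0"
  using assms by - (intro conjI; algebra)

lemma nobase: "v \<noteq> 0 \<Longrightarrow> Fmap v \<noteq> 0"
proof
  assume "v \<noteq> 0" "Fmap v = 0"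
  then have "v$1 = 0 \<and> v$2 = 0 \<and> v$3 = 0"
    by (intro nobase_alg) (simp_all add: vec6_eq)
  with \<open>v \<noteq> 0\<close> show False by (simp add: vec3_eq)
qed

lemma kern_alg:
  fixes x y z p q r :: complex
  assumes "y*z*p + x*z*q + x*y*r = 0"
   "(z^2-2*x*y)*p - x^2*q + 2*x*z*r = 0"
   "(2*x*z-y^2)*p - 2*x*y*q + x^2*r = 0"
   "2*x*y*p + (x^2-2*y*z)*q - y^2*r = 0"
   "y^2*p + (2*x*y-z^2)*q - 2*y*z*r = 0"
   "3*(y*z-x^2)*p + 3*(x*z-y^2)*q + 3*(x*y-z^2)*r = 0"
  shows "x*p = 0 \<and> x*q = 0 \<and> x*r = 0 \<and> y*p = 0 \<and> y*q = 0 \<and> y*r = 0 \<and> z*p = 0 \<and> z*q = 0 \<and> z*r = 0"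
  using assms by - (intro conjI; algebra)

lemma kern: assumes "Jm v h = 0" "v \<noteq> 0" shows "h = 0"
proof -
  have k: "v$1* h$1 = 0 \<and> v$1* h$2 = 0 \<and> v$1* h$3 = 0 \<and> v$2* h$1 = 0 \<and> v$2* h$2 = 0 \<and> v$2* h$3 = 0 \<and> v$3* h$1 = 0 \<and> v$3* h$2 = 0 \<and> v$3* h$3 = 0"
    using assms(1) by (intro kern_alg) (simp_all add: vec6_eq)
  from assms(2) have "v$1 \<noteq> 0 \<or> v$2 \<noteq> 0 \<or> v$3 \<noteq> 0" by (simp add: vec3_eq)
  with k show ?thesis by (auto simp: vec3_eq)
qed

lemma Jm_shift: "Jm v (w - d *s v) = Jm v w - (3*d) *s Fmap v"
  by (simp add: vec6_eq; intro conjI; algebra)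

lemma immersion:
  assumes "v \<noteq> 0" "(Fmap has_derivative D) (at v)" "D w = c *s Fmap v"
  shows "\<exists>c. w = c *s v"
proof -
  have "D = Jm v" using has_derivative_unique[OF assms(2) Fmap_deriv] .
  then have "Jm v (w - (c/3) *s v) = 0" using assms(3) by (simp add: Jm_shift)
  then have "w - (c/3) *s v = 0" using kern assms(1) by blast
  then show ?thesis by (metis eq_iff_diff_eq_0)
qed

definition P1 :: "complex^6 \<Rightarrow> complex^3" where
  "P1 a = vector [-(a$2* a$4), a$4* a$5, (a$5)^2  + a$3* a$5]"
definition P2 :: "complex^6 \<Rightarrow> complex^3" where
  "P2 a = vector [a$3* a$5 + (a$3)^2, (a$4)^2  + a$2* a$4, a$4* a$5  + a$3* a$4  + a$2* a$5  + a$2* a$3]"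
definition P3 :: "complex^6 \<Rightarrow> complex^3" where
  "P3 a = vector [a$2* a$3, -(a$3* a$5), a$2* a$4 + (a$2)^2]"
definition g1 :: "complex^3 \<Rightarrow> complex" where
  "g1 w = (let x = w$1; y = w$2; z = w$3 in -(x^2*y*z^2) + y^2*z^3 + x^3*y^2 - x*y^3*z)"
definition g2 :: "complex^3 \<Rightarrow> complex" where
  "g2 w = (let x = w$1; y = w$2; z = w$3 in -(x^2*y^2*z) - x*y*z^3 + y^3*z^2 + x^3*z^2)"
definition g3 :: "complex^3 \<Rightarrow> complex" where
  "g3 w = (let x = w$1; y = w$2; z = w$3 in x^2*z^3 - x*y^2*z^2 - x^3*y*z + x^2*y^3)"

lemma P1_syz: "P1 (Fmap w) = g1 w *s w"
  by (simp add: vec3_eq P1_def g1_def Let_def; intro conjI; algebra)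
lemma P2_syz: "P2 (Fmap w) = g2 w *s w"
  by (simp add: vec3_eq P2_def g2_def Let_def; intro conjI; algebra)
lemma P3_syz: "P3 (Fmap w) = g3 w *s w"
  by (simp add: vec3_eq P3_def g3_def Let_def; intro conjI; algebra)
lemma P1_hom: "P1 (c *s a) = c^2 *s P1 a"
  by (simp add: vec3_eq P1_def; intro conjI; algebra)
lemma P2_hom: "P2 (c *s a) = c^2 *s P2 a"
  by (simp add: vec3_eq P2_def; intro conjI; algebra)
lemma P3_hom: "P3 (c *s a) = c^2 *s P3 a"
  by (simp add: vec3_eq P3_def; intro conjI; algebra)

lemma syz_step:
  fixes P :: "complex^6 \<Rightarrow> complex^3" and g :: "complex^3 \<Rightarrow> complex"
  assumes syz: "\<And>w. P (Fmap w) = g w *s w" and hom: "\<And>a c. P (c *s a) = c^2 *s P a"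
    and eq: "Fmap u = c *s Fmap v" and c: "c \<noteq> 0" and g: "g v \<noteq> 0" and v: "v \<noteq> 0"
  shows "proj_eq u v"
proof -
  have e: "g u *s u = (c^2 * g v) *s v"
    using syz[of u] syz[of v] hom[of c "Fmap v"] eq by (simp add: vector_smult_assoc)
  have nz: "(c^2 * g v) *s v \<noteq> 0" using c g v by (simp add: vec_eq_iff)
  then have gu: "g u \<noteq> 0" using e by auto
  have "u = (c^2 * g v / g u) *s v"
    using e gu by (metis (no_types, lifting) nonzero_mult_div_cancel_left times_divide_eq_right
        vector_smult_assoc vector_smult_lid divide_self_if)
  moreover have "c^2 * g v / g u \<noteq> 0" using c g gu by simp
  ultimately show ?thesis by (metis proj_eqI)
qed

lemma radical_alg:
  fixes x y z :: complex
  assumes "-(x^2*y*z^2) + y^2*z^3 + x^3*y^2 - x*y^3*z = 0"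
    "-(x^2*y^2*z) - x*y*z^3 + y^3*z^2 + x^3*z^2 = 0"
    "x^2*z^3 - x*y^2*z^2 - x^3*y*z + x^2*y^3 = 0"
  shows "x*(z^2 - x*y) = 0 \<and> x*(x*z - y^2) = 0 \<and> y*(x^2 - y*z) = 0 \<and> y*(x*y - z^2) = 0
    \<and> (x*y*z)*(3*x*y*z - (x^3 + y^3 + z^3)) = 0"
  using assms by - (intro conjI; algebra)

lemma radical:
  assumes "g1 v = 0" "g2 v = 0" "g3 v = 0"
  shows "Fmap v $ 2 = 0 \<and> Fmap v $ 3 = 0 \<and> Fmap v $ 4 = 0 \<and> Fmap v $ 5 = 0 \<and> Fmap v $ 1 * Fmap v $ 6 = 0"
  using radical_alg[of "v$1" "v$2" "v$3"] assms unfolding g1_def g2_def g3_def Let_def Fmap_nth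
  by blast

lemma charA:
  assumes "v \<noteq> 0" "Fmap v $ 1 = 0" "Fmap v $ 2 = 0" "Fmap v $ 3 = 0" "Fmap v $ 4 = 0" "Fmap v $ 5 = 0"
  shows "proj_eq v (vector [1,0,0]) \<or> proj_eq v (vector [0,1,0]) \<or> proj_eq v (vector [0,0,1])"
proof -
  have h: "v$1 * v$2 = 0 \<and> v$2 * v$3 = 0 \<and> v$1 * v$3 = 0"
    using assms(2-6) unfolding Fmap_nth by - (intro conjI; algebra)
  from assms(1) have "v$1 \<noteq> 0 \<or> v$2 \<noteq> 0 \<or> v$3 \<noteq> 0" by (simp add: vec3_eq)
  then show ?thesis
  proof (elim disjE)
    assume a: "v$1 \<noteq> 0"
    then have "v = v$1 *s vector [1,0,0]" using h by (simp add: vec3_eq)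
    then show ?thesis using a proj_eqI by blast
  next
    assume a: "v$2 \<noteq> 0"
    then have "v = v$2 *s vector [0,1,0]" using h by (simp add: vec3_eq)
    then show ?thesis using a proj_eqI by blast
  next
    assume a: "v$3 \<noteq> 0"
    then have "v = v$3 *s vector [0,0,1]" using h by (simp add: vec3_eq)
    then show ?thesis using a proj_eqI by blast
  qed
qed

lemma charB:
  fixes \<omega> :: complex
  assumes omega: "\<omega>^2 + \<omega> + 1 = 0"
  assumes "v \<noteq> 0" "Fmap v $ 6 = 0" "Fmap v $ 2 = 0" "Fmap v $ 3 = 0" "Fmap v $ 4 = 0" "Fmap v $ 5 = 0"
  shows "proj_eq v (vector [1,1,1]) \<or> proj_eq v (vector [\<omega>,\<omega>^2,1]) \<or> proj_eq v (vector [\<omega>^2,\<omega>,1])"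
proof -
  define x y z where "x = v$1" "y = v$2" "z = v$3"
  have "Fmap v \<noteq> 0" using nobase assms(2) by blast
  then have "Fmap v $ 1 \<noteq> 0" using assms(3-7) by (auto simp: vec6_eq)
  then have nz: "x \<noteq> 0" "y \<noteq> 0" "z \<noteq> 0" unfolding x_y_z_def by auto
  have q1: "z^2 = x*y" using assms(4) nz(1) unfolding x_y_z_def Fmap_nth by simp
  have q2: "x*z = y^2" using assms(5) nz(1) unfolding x_y_z_def Fmap_nth by simp
  have "(y - z)*(y - \<omega>*z)*(y - \<omega>^2*z) = 0" using q1 q2 omega by algebra
  then consider "y = z" | "y = \<omega>*z" | "y = \<omega>^2*z" by auto
  then show ?thesis
  proof cases
    case 1
    then have "x = z" using q2 nz by (simp add: power2_eq_square)
    then have "v = z *s vector [1,1,1]" using 1 by (simp add: vec3_eq x_y_z_def)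
    then show ?thesis using nz proj_eqI by blast
  next
    case 2
    then have "x*z = (\<omega>^2*z)*z" using q2 by algebra
    then have "x = \<omega>^2*z" using nz(3) by (metis mult_right_cancel)
    then have "v = z *s vector [\<omega>^2,\<omega>,1]" using 2 by (simp add: vec3_eq x_y_z_def mult.commute)
    then show ?thesis using nz proj_eqI by blast
  next
    case 3
    then have "x*z = (\<omega>^4*z)*z" using q2 by algebra
    moreover have "\<omega>^4 = \<omega>" using omega by algebra
    ultimately have "x = \<omega>*z" using nz(3) by (metis mult_right_cancel)
    then have "v = z *s vector [\<omega>,\<omega>^2,1]" using 3 by (simp add: vec3_eq x_y_z_def mult.commute)
    then show ?thesis using nz proj_eqI by blast
  qed
qed

theorem lemma5:
  fixes \<omega> :: complex
  assumes omega: "\<omega>^2 + \<omega> + 1 = 0"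
  defines "A \<equiv> {u. proj_eq u (vector [1,0,0]) \<or> proj_eq u (vector [0,1,0])
                   \<or> proj_eq u (vector [0,0,1])}"
      and "B \<equiv> {u. proj_eq u (vector [1,1,1]) \<or> proj_eq u (vector [\<omega>,\<omega>^2,1])
                   \<or> proj_eq u (vector [\<omega>^2,\<omega>,1])}"
  shows
    \<comment> \<open>F is a morphism: no base points\<close>
    "(\<forall>v::complex^3. v \<noteq> 0 \<longrightarrow> Fmap v \<noteq> 0)
     \<comment> \<open>F is an immersion: the induced map C^3/Cv -> C^6/C F(v) of tangent spaces is injective\<close>
   \<and> (\<forall>v::complex^3. v \<noteq> 0 \<longrightarrow> Fmap differentiable (at v) \<and>
        (\<forall>D w. (Fmap has_derivative D) (at v) \<longrightarrow> (\<exists>c. D w = c *s Fmap v)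
               \<longrightarrow> (\<exists>c. w = c *s v)))
     \<comment> \<open>the exceptional images\<close>
   \<and> (\<forall>u\<in>A. proj_eq (Fmap u) (vector [0,0,0,0,0,1]))
   \<and> (\<forall>u\<in>B. proj_eq (Fmap u) (vector [1,0,0,0,0,0]))
     \<comment> \<open>injectivity away from these identifications\<close>
   \<and> (\<forall>u v::complex^3. u \<noteq> 0 \<longrightarrow> v \<noteq> 0 \<longrightarrow>
        (proj_eq (Fmap u) (Fmap v) \<longleftrightarrow>
          (proj_eq u v \<or> (u \<in> A \<and> v \<in> A) \<or> (u \<in> B \<and> v \<in> B))))"
proof -
  let ?e6 = "vector [0,0,0,0,0,1] :: complex^6"
  let ?e1 = "vector [1,0,0,0,0,0] :: complex^6"
  have S1: "\<forall>v::complex^3. v \<noteq> 0 \<longrightarrow> Fmap v \<noteq> 0" using nobase by blast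
  have S2: "\<forall>v::complex^3. v \<noteq> 0 \<longrightarrow> Fmap differentiable (at v) \<and>
        (\<forall>D w. (Fmap has_derivative D) (at v) \<longrightarrow> (\<exists>c. D w = c *s Fmap v)
               \<longrightarrow> (\<exists>c. w = c *s v))"
    using immersion Fmap_deriv unfolding differentiable_def by blast
  have a1: "proj_eq (Fmap (vector [1,0,0])) ?e6"
    by (rule proj_eqI[of "-1"]) (simp_all add: vec6_eq)
  have a2: "proj_eq (Fmap (vector [0,1,0])) ?e6"
    by (rule proj_eqI[of "-1"]) (simp_all add: vec6_eq)
  have a3: "proj_eq (Fmap (vector [0,0,1])) ?e6"
    by (rule proj_eqI[of "-1"]) (simp_all add: vec6_eq)
  have S3: "\<forall>u\<in>A. proj_eq (Fmap u) ?e6"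
    unfolding A_def using a1 a2 a3 proj_eq_Fmap proj_eq_trans by blast
  have b1: "proj_eq (Fmap (vector [1,1,1])) ?e1"
    by (rule proj_eqI[of 1]) (simp_all add: vec6_eq)
  have b2: "proj_eq (Fmap (vector [\<omega>,\<omega>^2,1])) ?e1"
  proof (rule proj_eqI[of 1])
    show "Fmap (vector [\<omega>,\<omega>^2,1]) = 1 *s ?e1"
      unfolding vec6_eq apply simp
      apply (intro conjI)
      using omega apply algebra+
      done
  qed simp
  have b3: "proj_eq (Fmap (vector [\<omega>^2,\<omega>,1])) ?e1"
  proof (rule proj_eqI[of 1])
    show "Fmap (vector [\<omega>^2,\<omega>,1]) = 1 *s ?e1"
      unfolding vec6_eq apply simp
      apply (intro conjI)
      using omega apply algebra+
      done
  qed simp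
  have S4: "\<forall>u\<in>B. proj_eq (Fmap u) ?e1"
    unfolding B_def using b1 b2 b3 proj_eq_Fmap proj_eq_trans by blast
  have S5: "proj_eq (Fmap u) (Fmap v) \<longleftrightarrow> (proj_eq u v \<or> (u \<in> A \<and> v \<in> A) \<or> (u \<in> B \<and> v \<in> B))"
    if u: "u \<noteq> 0" and v: "v \<noteq> 0" for u v :: "complex^3"
  proof
    assume "proj_eq u v \<or> (u \<in> A \<and> v \<in> A) \<or> (u \<in> B \<and> v \<in> B)"
    then show "proj_eq (Fmap u) (Fmap v)"
      using S3 S4 proj_eq_Fmap proj_eq_sym proj_eq_trans by blast
  next
    assume "proj_eq (Fmap u) (Fmap v)"
    then obtain c where c: "c \<noteq> 0" and eq: "Fmap u = c *s Fmap v" unfolding proj_eq_def by blast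
    then have comp: "\<And>i. Fmap u $ i = c * Fmap v $ i" by (simp del: Fmap_nth)
    show "proj_eq u v \<or> (u \<in> A \<and> v \<in> A) \<or> (u \<in> B \<and> v \<in> B)"
    proof (cases "g1 v = 0 \<and> g2 v = 0 \<and> g3 v = 0")
      case True
      then have r: "Fmap v $ 2 = 0 \<and> Fmap v $ 3 = 0 \<and> Fmap v $ 4 = 0 \<and> Fmap v $ 5 = 0 \<and> Fmap v $ 1 * Fmap v $ 6 = 0"
        using radical by blast
      then have ru: "Fmap u $ 2 = 0 \<and> Fmap u $ 3 = 0 \<and> Fmap u $ 4 = 0 \<and> Fmap u $ 5 = 0"
        using comp[of 1] comp[of 2] comp[of 3] comp[of 4] comp[of 5] comp[of 6] by (simp del: Fmap_nth)
      from r have "Fmap v $ 1 = 0 \<or> Fmap v $ 6 = 0" by (simp del: Fmap_nth)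
      then show ?thesis
      proof
        assume h: "Fmap v $ 1 = 0"
        then have "Fmap u $ 1 = 0" using comp[of 1] comp[of 2] comp[of 3] comp[of 4] comp[of 5] comp[of 6] by (simp del: Fmap_nth)
        then have "u \<in> A" using charA[OF u] ru unfolding A_def by blast
        moreover have "v \<in> A" using charA[OF v] r h unfolding A_def by blast
        ultimately show ?thesis by blast
      next
        assume h: "Fmap v $ 6 = 0"
        then have "Fmap u $ 6 = 0" using comp[of 1] comp[of 2] comp[of 3] comp[of 4] comp[of 5] comp[of 6] by (simp del: Fmap_nth)
        then have "u \<in> B" using charB[OF omega u] ru unfolding B_def by blast
        moreover have "v \<in> B" using charB[OF omega v] r h unfolding B_def by blast
        ultimately show ?thesis by blast
      qed
    next
      case False
      then consider "g1 v \<noteq> 0" | "g2 v \<noteq> 0" | "g3 v \<noteq> 0" by blast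
      then have "proj_eq u v"
      proof cases
        case 1 then show ?thesis using syz_step[OF P1_syz P1_hom eq c _ v] by blast
      next
        case 2 then show ?thesis using syz_step[OF P2_syz P2_hom eq c _ v] by blast
      next
        case 3 then show ?thesis using syz_step[OF P3_syz P3_hom eq c _ v] by blast
      qed
      then show ?thesis by blast
    qed
  qed
  show ?thesis using S1 S2 S3 S4 S5 by blast
qed
end
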